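(* For all KAT-morphisms $(\mathfrak{s},\mathfrak{t}): (\Sigma_0,T_0) \to (\Sigma_1,T_1)$ and all $e \in \mathsf{KAT}(\Sigma_0,T_0)$, we have $L(\mathrm{apply}^\mathfrak{s}_\mathfrak{t}(e)) = \mathrm{apply}^{\mathfrak{s}'}_\mathfrak{t}(L(e))$, where $\mathfrak{s}'$ is given by $\mathfrak{s}'(p) = L(\mathfrak{s}(p))$.
   Context: $\mathsf{KAT}(\Sigma,T)$ is the set of KAT expressions over action alphabet $\Sigma$ and test alphabet $T$, $\mathsf{BA}(T)$ the set of Boolean test expressions over $T$, $\mathsf{At}_T = 2^T$ the set of atoms, and $L(e)$ the guarded-string language semantics of a KAT expression $e$; $\mathcal{G}(\Sigma,T)$ denotes the set of regular guarded languages (sets of strings in $\mathsf{At}_T(\Sigma\mathsf{At}_T)^*$). Guarded composition $w\diamond x$ of $w=w'\alpha$ and $x=\alpha x'$ is $w'\alpha x'$ (defined only when the last atom of $w$ equals the first atom of $x$). A KAT-morphism $(\mathfrak{s},\mathfrak{t}):(\Sigma_0,T_0)\to(\Sigma_1,T_1)$ is a pair of functions $\mathfrak{s}:\Sigma_0\to\mathsf{KAT}(\Sigma_1,T_1)$ and $\mathfrak{t}:T_0\to\mathsf{BA}(T_1)$; on expressions, $\mathrm{apply}^\mathfrak{s}_\mathfrak{t}(e)$ is obtained from $e$ by replacing each test $t\in T_0$ by $\mathfrak{t}(t)$ and each action $p\in\Sigma_0$ by $\mathfrak{s}(p)$. For a guarded language morphism $(\mathfrak{s},\mathfrak{t})$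 with $\mathfrak{s}:\Sigma_0\to\mathcal{G}(\Sigma_1,T_1)$ and $\mathfrak{t}:T_0\to\mathsf{BA}(T_1)$: an atom $\beta\in\mathsf{At}_{T_1}$ is $\mathfrak{t}$-consistent with $\alpha\in\mathsf{At}_{T_0}$ if for all $t\in T_0$, $\alpha\le t$ iff $\beta\le\mathfrak{t}(t)$; for $L\in\mathcal{G}(\Sigma_0,T_0)$, $\mathrm{apply}_\mathfrak{t}(L)$ consists of all $\beta_0p_0\beta_1\cdots p_{n-1}\beta_n$ such that $\alpha_0p_0\alpha_1\cdots p_{n-1}\alpha_n\in L$ and each $\beta_i$ is $\mathfrak{t}$-consistent with $\alpha_i$; for $L\in\mathcal{G}(\Sigma_0,T_1)$, $\mathrm{apply}^\mathfrak{s}(L)$ consists of all $\alpha_0\diamond w_0\diamond\alpha_1\diamond\cdots\diamond\alpha_{n-1}\diamond w_{n-1}\diamond\alpha_n$ with $\alpha_0p_0\alpha_1\cdots p_{n-1}\alpha_n\in L$ and $w_i\in\mathfrak{s}(p_i)$; and $\mathrm{apply}^\mathfrak{s}_\mathfrak{t} = \mathrm{apply}^\mathfrak{s}\circ\mathrm{apply}_\mathfrak{t}$. *)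

theory Defs
  imports Main
begin

datatype 't bexp = BZero | BOne | BVar 't | BNot "'t bexp"
  | BAnd "'t bexp" "'t bexp" | BOr "'t bexp" "'t bexp"

datatype ('a, 't) kat = KTest "'t bexp" | KAct 'a
  | KPlus "('a, 't) kat" "('a, 't) kat" | KSeq "('a, 't) kat" "('a, 't) kat"
  | KStar "('a, 't) kat"

text \<open>Atoms are subsets of the test alphabet (At_T = 2^T): the tests that are true.
  An atom alpha satisfies b (alpha \<le> b) iff b evaluates to true under alpha.\<close>

type_synonym 't atom = "'t set"

fun atom_le :: "'t atom \<Rightarrow> 't bexp \<Rightarrow> bool" where
  "atom_le \<alpha> BZero = False"
| "atom_le \<alpha> BOne = True"
| "atom_le \<alpha> (BVar t) = (t \<in> \<alpha>)"
| "atom_le \<alpha> (BNot b) = (\<not> atom_le \<alpha> b)"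
| "atom_le \<alpha> (BAnd b c) = (atom_le \<alpha> b \<and> atom_le \<alpha> c)"
| "atom_le \<alpha> (BOr b c) = (atom_le \<alpha> b \<or> atom_le \<alpha> c)"

text \<open>A guarded string alpha_0 p_0 alpha_1 ... p_{n-1} alpha_n is represented as
  (alpha_0, [(p_0, alpha_1), ..., (p_{n-1}, alpha_n)]).\<close>

type_synonym ('a, 't) gstring = "'t atom \<times> ('a \<times> 't atom) list"

definition last_atom :: "('a, 't) gstring \<Rightarrow> 't atom" where
  "last_atom w = (if snd w = [] then fst w else snd (last (snd w)))"

definition gcomp :: "('a, 't) gstring set \<Rightarrow> ('a, 't) gstring set \<Rightarrow> ('a, 't) gstring set" where
  "gcomp A B = {(fst w, snd w @ snd x) | w x. w \<in> A \<and> x \<in> B \<and> last_atom w = fst x}"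

definition atoms_lang :: "('a, 't) gstring set" where
  "atoms_lang = {(\<alpha>, []) | \<alpha>. True}"

fun gpow :: "('a, 't) gstring set \<Rightarrow> nat \<Rightarrow> ('a, 't) gstring set" where
  "gpow A 0 = atoms_lang"
| "gpow A (Suc n) = gcomp A (gpow A n)"

fun lang :: "('a, 't) kat \<Rightarrow> ('a, 't) gstring set" where
  "lang (KTest b) = {(\<alpha>, []) | \<alpha>. atom_le \<alpha> b}"
| "lang (KAct p) = {(\<alpha>, [(p, \<beta>)]) | \<alpha> \<beta>. True}"
| "lang (KPlus e f) = lang e \<union> lang f"
| "lang (KSeq e f) = gcomp (lang e) (lang f)"
| "lang (KStar e) = (\<Union>n. gpow (lang e) n)"

fun bapply :: "('t0 \<Rightarrow> 't1 bexp) \<Rightarrow> 't0 bexp \<Rightarrow> 't1 bexp" where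
  "bapply t BZero = BZero"
| "bapply t BOne = BOne"
| "bapply t (BVar x) = t x"
| "bapply t (BNot b) = BNot (bapply t b)"
| "bapply t (BAnd b c) = BAnd (bapply t b) (bapply t c)"
| "bapply t (BOr b c) = BOr (bapply t b) (bapply t c)"

fun kat_apply :: "('a0 \<Rightarrow> ('a1, 't1) kat) \<Rightarrow> ('t0 \<Rightarrow> 't1 bexp) \<Rightarrow> ('a0, 't0) kat \<Rightarrow> ('a1, 't1) kat" where
  "kat_apply s t (KTest b) = KTest (bapply t b)"
| "kat_apply s t (KAct p) = s p"
| "kat_apply s t (KPlus e f) = KPlus (kat_apply s t e) (kat_apply s t f)"
| "kat_apply s t (KSeq e f) = KSeq (kat_apply s t e) (kat_apply s t f)"
| "kat_apply s t (KStar e) = KStar (kat_apply s t e)"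

definition t_consistent :: "('t0 \<Rightarrow> 't1 bexp) \<Rightarrow> 't1 atom \<Rightarrow> 't0 atom \<Rightarrow> bool" where
  "t_consistent t \<beta> \<alpha> = (\<forall>x. x \<in> \<alpha> \<longleftrightarrow> atom_le \<beta> (t x))"

definition lapply_t :: "('t0 \<Rightarrow> 't1 bexp) \<Rightarrow> ('a, 't0) gstring set \<Rightarrow> ('a, 't1) gstring set" where
  "lapply_t t L = {(\<beta>0, ys) | \<beta>0 ys \<alpha>0 xs. (\<alpha>0, xs) \<in> L \<and> t_consistent t \<beta>0 \<alpha>0 \<and>
      list_all2 (\<lambda>(p, \<alpha>) (q, \<beta>). p = q \<and> t_consistent t \<beta> \<alpha>) xs ys}"

text \<open>expand s w = { alpha_0 \<diamond> w_0 \<diamond> alpha_1 \<diamond> ... \<diamond> w_{n-1} \<diamond> alpha_n | w_i \<in> s p_i }\<close>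

fun expand :: "('a0 \<Rightarrow> ('a1, 't) gstring set) \<Rightarrow> ('a0, 't) gstring \<Rightarrow> ('a1, 't) gstring set" where
  "expand s (\<alpha>, []) = {(\<alpha>, [])}"
| "expand s (\<alpha>, (p, \<beta>) # xs) = gcomp (gcomp {(\<alpha>, [])} (s p)) (expand s (\<beta>, xs))"

definition lapply_s :: "('a0 \<Rightarrow> ('a1, 't) gstring set) \<Rightarrow> ('a0, 't) gstring set \<Rightarrow> ('a1, 't) gstring set" where
  "lapply_s s L = (\<Union>w\<in>L. expand s w)"

definition lapply_st :: "('a0 \<Rightarrow> ('a1, 't1) gstring set) \<Rightarrow> ('t0 \<Rightarrow> 't1 bexp) \<Rightarrow> ('a0, 't0) gstring set \<Rightarrow> ('a1, 't1) gstring set" where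
  "lapply_st s t L = lapply_s s (lapply_t t L)"

end

theory Submission
  imports Defs
begin

lemma last_atom_app: "last_atom w = fst x \<Longrightarrow> last_atom (fst w, snd w @ snd x) = last_atom x"
proof (cases "snd x = []")
  case True
  then show "last_atom w = fst x \<Longrightarrow> ?thesis" by (simp add: last_atom_def)
next
  case False
  then show "last_atom w = fst x \<Longrightarrow> ?thesis" by (simp add: last_atom_def)
qed

lemma last_atom_cons: "last_atom (\<alpha>, (p, \<beta>) # xs) = last_atom (\<beta>, xs)"
  by (simp add: last_atom_def)

lemma gcomp_assoc: "gcomp (gcomp A B) C = gcomp A (gcomp B C)"
proof
  show "gcomp (gcomp A B) C \<subseteq> gcomp A (gcomp B C)"
  proof
    fix z assume "z \<in> gcomp (gcomp A B) C"
    then obtain w x y where h: "w \<in> A" "x \<in> B" "y \<in> C" "last_atom w = fst x"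
      "last_atom (fst w, snd w @ snd x) = fst y" "z = (fst w, (snd w @ snd x) @ snd y)"
      unfolding gcomp_def by auto
    have l: "last_atom x = fst y" using h(4,5) last_atom_app by metis
    have "(fst x, snd x @ snd y) \<in> gcomp B C" using h l unfolding gcomp_def by blast
    moreover have "z = (fst w, snd w @ snd (fst x, snd x @ snd y))" using h by simp
    moreover have "last_atom w = fst (fst x, snd x @ snd y)" using h by simp
    ultimately show "z \<in> gcomp A (gcomp B C)" using h(1) unfolding gcomp_def by blast
  qed
next
  show "gcomp A (gcomp B C) \<subseteq> gcomp (gcomp A B) C"
  proof
    fix z assume "z \<in> gcomp A (gcomp B C)"
    then obtain w x y where h: "w \<in> A" "x \<in> B" "y \<in> C" "last_atom x = fst y"
      "last_atom w = fst x" "z = (fst w, snd w @ (snd x @ snd y))"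
      unfolding gcomp_def by auto
    have l: "last_atom (fst w, snd w @ snd x) = fst y" using h(4,5) last_atom_app by metis
    have "(fst w, snd w @ snd x) \<in> gcomp A B" using h unfolding gcomp_def by blast
    moreover have "z = (fst (fst w, snd w @ snd x), snd (fst w, snd w @ snd x) @ snd y)" using h by simp
    ultimately show "z \<in> gcomp (gcomp A B) C" using h(3) l unfolding gcomp_def by blast
  qed
qed

lemma gcomp_unit_l: "gcomp {(\<alpha>, [])} A = {w\<in>A. fst w = \<alpha>}"
  unfolding gcomp_def by (auto simp: last_atom_def)

lemma gcomp_unit_r: "gcomp A {(\<beta>, [])} = {w\<in>A. last_atom w = \<beta>}"
  unfolding gcomp_def by auto

lemma gcomp_mono: "A \<subseteq> A' \<Longrightarrow> B \<subseteq> B' \<Longrightarrow> gcomp A B \<subseteq> gcomp A' B'"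
  unfolding gcomp_def by blast

lemma expand_fst_last: "v \<in> expand S x \<Longrightarrow> fst v = fst x \<and> last_atom v = last_atom x"
proof (induction S x arbitrary: v rule: expand.induct)
  case (1 s \<alpha>)
  then show ?case by (simp add: last_atom_def)
next
  case (2 s \<alpha> p \<beta> xs)
  from 2(2) have "v \<in> gcomp (gcomp {(\<alpha>, [])} (s p)) (expand s (\<beta>, xs))" by simp
  then obtain u y where u: "u \<in> gcomp {(\<alpha>, [])} (s p)" and y: "y \<in> expand s (\<beta>, xs)"
    and eq: "last_atom u = fst y" and v: "v = (fst u, snd u @ snd y)"
    unfolding gcomp_def[of "gcomp {(\<alpha>, [])} (s p)"] by blast
  from u have "fst u = \<alpha>" by (simp add: gcomp_unit_l)
  moreover have "last_atom v = last_atom y" using v eq last_atom_app by metis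
  moreover from 2(1)[OF y] have "fst y = \<beta> \<and> last_atom y = last_atom (\<beta>, xs)" by simp
  ultimately show ?case using v by (auto simp: last_atom_def)
qed

lemma fst_expand_gcomp: "gcomp {(fst x, [])} (expand S x) = expand S x"
  using expand_fst_last by (fastforce simp: gcomp_unit_l)

lemma expand_app: "last_atom w = fst x \<Longrightarrow>
  expand S (fst w, snd w @ snd x) = gcomp (expand S w) (expand S x)"
proof (induction "snd w" arbitrary: w)
  case Nil
  then have "w = (fst x, [])" by (cases w) (auto simp: last_atom_def)
  then show ?case using fst_expand_gcomp[of x S] by simp
next
  case (Cons a xs)
  obtain \<alpha> where w: "w = (\<alpha>, a # xs)" using Cons(2) by (cases w) auto
  obtain p \<beta> where a: "a = (p, \<beta>)" by (cases a)
  have la: "last_atom (\<beta>, xs) = fst x" using Cons(3) w a last_atom_cons by metis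
  have "expand S (fst w, snd w @ snd x) = gcomp (gcomp {(\<alpha>, [])} (S p)) (expand S (\<beta>, xs @ snd x))"
    using w a by simp
  also have "expand S (\<beta>, xs @ snd x) = gcomp (expand S (\<beta>, xs)) (expand S x)"
    using Cons(1)[of "(\<beta>, xs)"] la by simp
  finally show ?case using w a by (simp add: gcomp_assoc)
qed

lemma lapply_s_gcomp: "lapply_s S (gcomp A B) = gcomp (lapply_s S A) (lapply_s S B)"
proof
  show "lapply_s S (gcomp A B) \<subseteq> gcomp (lapply_s S A) (lapply_s S B)"
  proof
    fix z assume "z \<in> lapply_s S (gcomp A B)"
    then obtain u v where "u \<in> A" "v \<in> B" "last_atom u = fst v" "z \<in> expand S (fst u, snd u @ snd v)"
      unfolding lapply_s_def gcomp_def by auto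
    then have "z \<in> gcomp (expand S u) (expand S v)" by (simp add: expand_app)
    moreover have "gcomp (expand S u) (expand S v) \<subseteq> gcomp (lapply_s S A) (lapply_s S B)"
      using \<open>u \<in> A\<close> \<open>v \<in> B\<close> by (intro gcomp_mono) (auto simp: lapply_s_def)
    ultimately show "z \<in> gcomp (lapply_s S A) (lapply_s S B)" by blast
  qed
next
  show "gcomp (lapply_s S A) (lapply_s S B) \<subseteq> lapply_s S (gcomp A B)"
  proof
    fix z assume "z \<in> gcomp (lapply_s S A) (lapply_s S B)"
    then obtain w' x' u v where "u \<in> A" "v \<in> B" "w' \<in> expand S u" "x' \<in> expand S v"
      "last_atom w' = fst x'" "z = (fst w', snd w' @ snd x')"
      unfolding lapply_s_def gcomp_def by auto
    moreover have "last_atom u = fst v"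
      using expand_fst_last[OF \<open>w' \<in> expand S u\<close>] expand_fst_last[OF \<open>x' \<in> expand S v\<close>]
        \<open>last_atom w' = fst x'\<close> by simp
    ultimately have "z \<in> gcomp (expand S u) (expand S v)"
      unfolding gcomp_def by blast
    then have "z \<in> expand S (fst u, snd u @ snd v)"
      using \<open>last_atom u = fst v\<close> by (simp add: expand_app)
    moreover have "(fst u, snd u @ snd v) \<in> gcomp A B"
      using \<open>u \<in> A\<close> \<open>v \<in> B\<close> \<open>last_atom u = fst v\<close> unfolding gcomp_def by blast
    ultimately show "z \<in> lapply_s S (gcomp A B)" unfolding lapply_s_def by blast
  qed
qed

lemma lapply_s_atoms: "lapply_s S {(\<alpha>, []) | \<alpha>. P \<alpha>} = {(\<alpha>, []) | \<alpha>. P \<alpha>}"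
  unfolding lapply_s_def by auto

lemma lapply_s_atoms_lang: "lapply_s S atoms_lang = atoms_lang"
  unfolding atoms_lang_def using lapply_s_atoms[of S "\<lambda>_. True"] by simp

lemma lapply_s_Un: "lapply_s S (A \<union> B) = lapply_s S A \<union> lapply_s S B"
  unfolding lapply_s_def by auto

lemma lapply_s_UN: "lapply_s S (\<Union>n. A n) = (\<Union>n. lapply_s S (A n))"
  unfolding lapply_s_def by auto

lemma lapply_s_act: "lapply_s S {(\<alpha>, [(p, \<beta>)]) | \<alpha> \<beta>. True} = S p"
proof
  show "lapply_s S {(\<alpha>, [(p, \<beta>)]) | \<alpha> \<beta>. True} \<subseteq> S p"
    unfolding lapply_s_def by (auto simp: gcomp_unit_l gcomp_unit_r)
next
  show "S p \<subseteq> lapply_s S {(\<alpha>, [(p, \<beta>)]) | \<alpha> \<beta>. True}"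
  proof
    fix w assume "w \<in> S p"
    then have "w \<in> expand S (fst w, [(p, last_atom w)])"
      by (simp add: gcomp_unit_l gcomp_unit_r)
    then show "w \<in> lapply_s S {(\<alpha>, [(p, \<beta>)]) | \<alpha> \<beta>. True}"
      unfolding lapply_s_def by blast
  qed
qed

definition proj :: "('t0 \<Rightarrow> 't1 bexp) \<Rightarrow> 't1 atom \<Rightarrow> 't0 atom" where
  "proj t \<beta> = {x. atom_le \<beta> (t x)}"

definition gproj :: "('t0 \<Rightarrow> 't1 bexp) \<Rightarrow> ('a, 't1) gstring \<Rightarrow> ('a, 't0) gstring" where
  "gproj t w = (proj t (fst w), map (\<lambda>(q, \<beta>). (q, proj t \<beta>)) (snd w))"

lemma t_consistent_iff: "t_consistent t \<beta> \<alpha> \<longleftrightarrow> \<alpha> = proj t \<beta>"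
  unfolding t_consistent_def proj_def by auto

lemma list_all2_proj: "list_all2 (\<lambda>(p, \<alpha>) (q, \<beta>). p = q \<and> \<alpha> = proj t \<beta>) xs ys
  \<longleftrightarrow> xs = map (\<lambda>(q, \<beta>). (q, proj t \<beta>)) ys"
proof (induction ys arbitrary: xs)
  case Nil then show ?case by auto
next
  case (Cons y ys)
  then show ?case by (cases xs) (auto split: prod.splits)
qed

lemma lapply_t_pre: "lapply_t t L = {w. gproj t w \<in> L}"
  unfolding lapply_t_def gproj_def by (auto simp: t_consistent_iff list_all2_proj)

lemma last_atom_gproj: "last_atom (gproj t w) = proj t (last_atom w)"
  unfolding last_atom_def gproj_def by (auto simp: last_map split: prod.splits)

lemma lapply_t_gcomp: "lapply_t t (gcomp A B) = gcomp (lapply_t t A) (lapply_t t B)"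
proof
  show "lapply_t t (gcomp A B) \<subseteq> gcomp (lapply_t t A) (lapply_t t B)"
  proof
    fix w assume "w \<in> lapply_t t (gcomp A B)"
    then obtain u v where uv: "u \<in> A" "v \<in> B" "last_atom u = fst v"
      "gproj t w = (fst u, snd u @ snd v)"
      unfolding lapply_t_pre gcomp_def by auto
    then have "map (\<lambda>(q, \<beta>). (q, proj t \<beta>)) (snd w) = snd u @ snd v"
      by (simp add: gproj_def)
    then obtain ys1 ys2 where ys: "snd w = ys1 @ ys2"
      "map (\<lambda>(q, \<beta>). (q, proj t \<beta>)) ys1 = snd u" "map (\<lambda>(q, \<beta>). (q, proj t \<beta>)) ys2 = snd v"
      by (auto simp: map_eq_append_conv)
    define w1 where "w1 = (fst w, ys1)"
    define w2 where "w2 = (last_atom w1, ys2)"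
    have p1: "gproj t w1 = u" using uv(4) ys unfolding w1_def gproj_def by (cases u) auto
    have "proj t (last_atom w1) = fst v" using last_atom_gproj[of t w1] p1 uv(3) by simp
    then have p2: "gproj t w2 = v" using ys unfolding w2_def gproj_def by (cases v) auto
    have "w = (fst w1, snd w1 @ snd w2)" using ys unfolding w1_def w2_def by (cases w) auto
    moreover have "w1 \<in> lapply_t t A" "w2 \<in> lapply_t t B"
      using p1 p2 uv by (auto simp: lapply_t_pre)
    moreover have "last_atom w1 = fst w2" by (simp add: w2_def)
    ultimately show "w \<in> gcomp (lapply_t t A) (lapply_t t B)" unfolding gcomp_def by blast
  qed
next
  show "gcomp (lapply_t t A) (lapply_t t B) \<subseteq> lapply_t t (gcomp A B)"
  proof
    fix z assume "z \<in> gcomp (lapply_t t A) (lapply_t t B)"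
    then obtain w x where wx: "gproj t w \<in> A" "gproj t x \<in> B" "last_atom w = fst x"
      "z = (fst w, snd w @ snd x)"
      unfolding lapply_t_pre gcomp_def by auto
    have "fst (gproj t x) = proj t (fst x)" by (simp add: gproj_def)
    then have "last_atom (gproj t w) = fst (gproj t x)"
      using wx(3) last_atom_gproj[of t w] by simp
    moreover have "gproj t z = (fst (gproj t w), snd (gproj t w) @ snd (gproj t x))"
      using wx(4) by (simp add: gproj_def)
    ultimately show "z \<in> lapply_t t (gcomp A B)"
      using wx unfolding lapply_t_pre gcomp_def by blast
  qed
qed

lemma atom_le_bapply: "atom_le \<beta> (bapply t b) = atom_le (proj t \<beta>) b"
  by (induction b) (auto simp: proj_def)

definition F where "F S t L = lapply_s S (lapply_t t L)"

lemma F_gcomp: "F S t (gcomp A B) = gcomp (F S t A) (F S t B)"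
  unfolding F_def by (simp add: lapply_t_gcomp lapply_s_gcomp)

lemma lapply_t_atoms: "lapply_t t {(\<alpha>, []) | \<alpha>. P \<alpha>} = {(\<beta>, []) | \<beta>. P (proj t \<beta>)}"
proof
  show "lapply_t t {(\<alpha>, []) | \<alpha>. P \<alpha>} \<subseteq> {(\<beta>, []) | \<beta>. P (proj t \<beta>)}"
    unfolding lapply_t_pre gproj_def by (force simp: prod_eq_iff)
  show "{(\<beta>, []) | \<beta>. P (proj t \<beta>)} \<subseteq> lapply_t t {(\<alpha>, []) | \<alpha>. P \<alpha>}"
    unfolding lapply_t_pre gproj_def by auto
qed

lemma F_atoms: "F S t atoms_lang = atoms_lang"
  unfolding F_def atoms_lang_def lapply_t_atoms lapply_s_atoms by simp

lemma F_gpow: "F S t (gpow A n) = gpow (F S t A) n"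
  by (induction n) (simp_all add: F_atoms F_gcomp)

theorem proposition5p3:
  fixes s :: "'a0 \<Rightarrow> ('a1, 't1) kat" and t :: "'t0 \<Rightarrow> 't1 bexp" and e :: "('a0, 't0) kat"
  shows "lang (kat_apply s t e) = lapply_st (\<lambda>p. lang (s p)) t (lang e)"
proof -
  have "lang (kat_apply s t e) = F (\<lambda>p. lang (s p)) t (lang e)"
  proof (induction e)
    case (KTest b)
    show ?case unfolding F_def by (simp add: lapply_t_atoms lapply_s_atoms atom_le_bapply)
  next
    case (KAct p)
    have "lapply_t t (lang (KAct p)) = {(\<alpha>, [(p, \<beta>)]) | \<alpha> \<beta>. True}"
      unfolding lapply_t_pre gproj_def by auto
    then show ?case unfolding F_def using lapply_s_act[of "\<lambda>p. lang (s p)" p] by simp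
  next
    case (KPlus e1 e2)
    have "lapply_t t (lang e1 \<union> lang e2) = lapply_t t (lang e1) \<union> lapply_t t (lang e2)"
      unfolding lapply_t_pre by auto
    then show ?case using KPlus unfolding F_def by (simp add: lapply_s_Un)
  next
    case (KSeq e1 e2)
    then show ?case by (simp add: F_gcomp)
  next
    case (KStar e)
    have "lapply_t t (\<Union>n. gpow (lang e) n) = (\<Union>n. lapply_t t (gpow (lang e) n))"
      unfolding lapply_t_pre by auto
    then have "F (\<lambda>p. lang (s p)) t (lang (KStar e)) = (\<Union>n. F (\<lambda>p. lang (s p)) t (gpow (lang e) n))"
      unfolding F_def by (simp add: lapply_s_UN)
    then show ?case using KStar by (simp add: F_gpow)
  qed
  then show ?thesis unfolding F_def lapply_st_def .
qed

end
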